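(* Let $k$ be a field and $A$ a graded $k$-subalgebra of the polynomial ring $B=k[X_1,\dots,X_n]$ with standard grading. Suppose there is a retraction $\pi:B\to A$ with $\pi(B_+)\subseteq B_+$. Then there exist an invertible matrix $\sigma\in GL_n(k)$ (acting by linear change of variables $X_i\mapsto\sigma(X_i)=\sum_j\sigma_{ij}X_j$) and an integer $d\le n$ such that $A=k[\sigma(X_1),\dots,\sigma(X_d)]$. In particular $A$ is a polynomial ring over $k$.
   Context: The standard grading has $B_i$ the homogeneous polynomials of degree $i$; $B_+=\bigoplus_{i\ge1}B_i$. $A$ graded means $A=\bigoplus_i(A\cap B_i)$. A retraction $\pi:B\to A$ is a ring homomorphism onto $A$ restricting to the identity on $A$. *)

theory Defs
  imports "HOL-Library.Poly_Mapping"
begin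

text \<open>Polynomials over a field: finitely supported maps from monomials
(finitely supported exponent vectors) to coefficients. Variables are X_0,...,X_(n-1).\<close>

type_synonym 'a mpol = "(nat \<Rightarrow>\<^sub>0 nat) \<Rightarrow>\<^sub>0 'a"

definition Var :: "nat \<Rightarrow> 'a::field mpol" where
  "Var i = Poly_Mapping.single (Poly_Mapping.single i 1) 1"

definition Const :: "'a::field \<Rightarrow> 'a mpol" where
  "Const c = Poly_Mapping.single 0 c"

definition mdeg :: "(nat \<Rightarrow>\<^sub>0 nat) \<Rightarrow> nat" where
  "mdeg m = (\<Sum>i\<in>Poly_Mapping.keys m. Poly_Mapping.lookup m i)"

definition PolyRing :: "nat \<Rightarrow> 'a::field mpol set" where
  "PolyRing n = {p. \<forall>m\<in>Poly_Mapping.keys p. \<forall>i\<in>Poly_Mapping.keys m. i < n}"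

definition hcomp :: "nat \<Rightarrow> 'a::field mpol \<Rightarrow> 'a mpol" where
  "hcomp d p = Abs_poly_mapping (\<lambda>m. if mdeg m = d then Poly_Mapping.lookup p m else 0)"

text \<open>B_+ : sum of the components of positive degree, i.e. zero constant term\<close>
definition PolyRing_plus :: "nat \<Rightarrow> 'a::field mpol set" where
  "PolyRing_plus n = {p \<in> PolyRing n. hcomp 0 p = 0}"

definition k_subalgebra :: "nat \<Rightarrow> 'a::field mpol set \<Rightarrow> bool" where
  "k_subalgebra n A \<longleftrightarrow> A \<subseteq> PolyRing n \<and> (\<forall>c. Const c \<in> A) \<and>
     (\<forall>p\<in>A. \<forall>q\<in>A. p + q \<in> A \<and> p * q \<in> A)"

definition graded :: "'a::field mpol set \<Rightarrow> bool" where
  "graded A \<longleftrightarrow> (\<forall>p\<in>A. \<forall>d. hcomp d p \<in> A)"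

definition retraction :: "nat \<Rightarrow> 'a::field mpol set \<Rightarrow> ('a mpol \<Rightarrow> 'a mpol) \<Rightarrow> bool" where
  "retraction n A \<pi> \<longleftrightarrow>
     (\<forall>p\<in>PolyRing n. \<forall>q\<in>PolyRing n. \<pi> (p + q) = \<pi> p + \<pi> q \<and> \<pi> (p * q) = \<pi> p * \<pi> q)
     \<and> \<pi> 1 = 1 \<and> \<pi> ` PolyRing n = A \<and> (\<forall>a\<in>A. \<pi> a = a)"

definition gen_algebra :: "nat \<Rightarrow> 'a::field mpol set \<Rightarrow> 'a mpol set" where
  "gen_algebra n S = \<Inter>{C. k_subalgebra n C \<and> S \<subseteq> C}"

definition invertible_matrix :: "nat \<Rightarrow> (nat \<Rightarrow> nat \<Rightarrow> 'a::field) \<Rightarrow> bool" where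
  "invertible_matrix n \<sigma> \<longleftrightarrow> (\<exists>\<tau>. \<forall>i<n. \<forall>j<n.
      (\<Sum>k<n. \<sigma> i k * \<tau> k j) = (if i = j then 1 else 0) \<and>
      (\<Sum>k<n. \<tau> i k * \<sigma> k j) = (if i = j then 1 else 0))"

definition lin_var :: "nat \<Rightarrow> (nat \<Rightarrow> nat \<Rightarrow> 'a::field) \<Rightarrow> nat \<Rightarrow> 'a mpol" where
  "lin_var n \<sigma> i = (\<Sum>j<n. Const (\<sigma> i j) * Var j)"

end

theory Submission
  imports Defs "HOL.Vector_Spaces"
begin


abbreviation keys where "keys \<equiv> Poly_Mapping.keys"
abbreviation lookup where "lookup \<equiv> Poly_Mapping.lookup"
abbreviation single where "single \<equiv> Poly_Mapping.single"

definition sc :: "'a::field \<Rightarrow> 'a mpol \<Rightarrow> 'a mpol" where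
  "sc c p = Const c * p"

lemma Const_mult: "Const a * Const b = Const (a * b)"
  by (simp add: Const_def mult_single)

lemma Const_one: "Const 1 = 1"
  by (simp add: Const_def one_poly_mapping.abs_eq single.abs_eq)

lemma Const_zero[simp]: "Const 0 = 0"
  by (simp add: Const_def)

lemma Const_add: "Const (a + b) = Const a + Const b"
  by (simp add: Const_def single_add)

interpretation vs: vector_space "sc :: 'a::field \<Rightarrow> 'a mpol \<Rightarrow> 'a mpol"
  by unfold_locales
    (auto simp: sc_def distrib_left distrib_right Const_add Const_one mult.assoc[symmetric] Const_mult)

definition homog :: "nat \<Rightarrow> 'a::field mpol \<Rightarrow> bool" where
  "homog e p \<longleftrightarrow> (\<forall>m\<in>keys p. mdeg m = e)"

lemma mdeg_sum: "finite K \<Longrightarrow> keys m \<subseteq> K \<Longrightarrow> mdeg m = (\<Sum>i\<in>K. lookup m i)"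
  unfolding mdeg_def
  by (rule sum.mono_neutral_left) (auto simp: in_keys_iff)

lemma mdeg_add: "mdeg (a + b) = mdeg a + mdeg b"
proof -
  let ?K = "keys a \<union> keys b"
  have "mdeg (a+b) = (\<Sum>i\<in>?K. lookup (a+b) i)"
    using keys_add[of a b] by (intro mdeg_sum) auto
  also have "\<dots> = (\<Sum>i\<in>?K. lookup a i) + (\<Sum>i\<in>?K. lookup b i)"
    by (simp add: lookup_add sum.distrib)
  also have "\<dots> = mdeg a + mdeg b"
    using mdeg_sum[of "keys a \<union> keys b" a] mdeg_sum[of "keys a \<union> keys b" b] by simp
  finally show ?thesis .
qed

lemma mdeg_zero[simp]: "mdeg 0 = 0"
  by (simp add: mdeg_def)

lemma mdeg_single[simp]: "mdeg (single i (k::nat)) = k"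
  by (simp add: mdeg_def)

lemma mdeg_single1: "mdeg (single i (1::nat)) = 1"
  by (simp add: mdeg_def)

lemma mdeg_eq0: assumes "mdeg m = 0" shows "m = 0"
proof -
  have "\<forall>i\<in>keys m. lookup m i = 0" using assms by (simp add: mdeg_def)
  then have "keys m = {}" using in_keys_iff by blast
  then show ?thesis by simp
qed

lemma mdeg_pos_key: "mdeg m \<noteq> 0 \<Longrightarrow> keys m \<noteq> {}"
  unfolding mdeg_def by auto

lemma split_mon:
  fixes m :: "nat \<Rightarrow>\<^sub>0 nat"
  assumes "i \<in> keys m"
  shows "m = single i 1 + (m - single i 1)" "keys (m - single i 1) \<subseteq> keys m"
proof -
  have "lookup m i \<ge> 1" using assms by (simp add: in_keys_iff)
  then show "m = single i 1 + (m - single i 1)"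
    by (intro poly_mapping_eqI) (auto simp: lookup_add lookup_minus lookup_single when_def)
  show "keys (m - single i 1) \<subseteq> keys m"
    by (auto simp: in_keys_iff lookup_minus)
qed

lemma mdeg_eq1: assumes "mdeg m = 1" obtains j where "m = single j 1" "j \<in> keys m"
proof -
  obtain j where j: "j \<in> keys m" using mdeg_pos_key assms by fastforce
  have e: "m = single j 1 + (m - single j 1)" using split_mon[OF j] by simp
  then have "mdeg m = 1 + mdeg (m - single j 1)"
    by (metis mdeg_add mdeg_single1)
  then have "m - single j 1 = 0" using assms mdeg_eq0 by simp
  with e j show ?thesis using that by simp
qed

lemma lookup_hcomp: "lookup (hcomp d p) m = (if mdeg m = d then lookup p m else 0)"
proof -
  have "finite {m. (if mdeg m = d then lookup p m else 0) \<noteq> 0}"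
    by (rule finite_subset[OF _ finite_lookup[of p]]) auto
  then show ?thesis unfolding hcomp_def by simp
qed

lemma keys_hcomp: "keys (hcomp d p) \<subseteq> keys p"
  by (auto simp: in_keys_iff lookup_hcomp split: if_splits)

lemma homog_hcomp: "homog d (hcomp d p)"
  by (auto simp: homog_def in_keys_iff lookup_hcomp split: if_splits)

lemma hcomp_homog: "homog d p \<Longrightarrow> hcomp d p = p"
  by (intro poly_mapping_eqI) (auto simp: homog_def lookup_hcomp in_keys_iff)

lemma hcomp_homog0: "homog e p \<Longrightarrow> e \<noteq> d \<Longrightarrow> hcomp d p = 0"
  by (intro poly_mapping_eqI) (auto simp: homog_def lookup_hcomp in_keys_iff)

lemma hcomp_add: "hcomp d (p + q) = hcomp d p + hcomp d q"
  by (intro poly_mapping_eqI) (auto simp: lookup_hcomp lookup_add)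

lemma hcomp_zero[simp]: "hcomp d 0 = 0"
  by (intro poly_mapping_eqI) (auto simp: lookup_hcomp)

lemma hcomp_sum: "hcomp d (sum f X) = (\<Sum>x\<in>X. hcomp d (f x))"
  by (induction X rule: infinite_finite_induct) (auto simp: hcomp_add)

lemma homog_mult: "homog a p \<Longrightarrow> homog b q \<Longrightarrow> homog (a+b) (p*q)"
  unfolding homog_def using keys_mult[of p q] by (fastforce simp: mdeg_add)

lemma hcomp_decomp: "p = (\<Sum>a\<in>mdeg ` keys p. hcomp a p)"
proof (rule poly_mapping_eqI)
  fix m
  have "(\<Sum>a\<in>mdeg ` keys p. lookup (hcomp a p) m) = (\<Sum>a\<in>mdeg ` keys p. if a = mdeg m then lookup p m else 0)"
    by (rule sum.cong) (auto simp: lookup_hcomp)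
  also have "\<dots> = lookup p m"
    by (auto simp: sum.delta' in_keys_iff)
  finally show "lookup p m = lookup (\<Sum>a\<in>mdeg ` keys p. hcomp a p) m"
    by (simp add: lookup_sum)
qed

lemma hcomp_prod_hom: "hcomp e (hcomp a u * hcomp b v) = (if a + b = e then hcomp a u * hcomp b v else 0)"
proof (cases "a + b = e")
  case True
  then show ?thesis using hcomp_homog[OF homog_mult[OF homog_hcomp[of a u] homog_hcomp[of b v]]] by simp
next
  case False
  then show ?thesis using hcomp_homog0[OF homog_mult[OF homog_hcomp[of a u] homog_hcomp[of b v]], of e] by simp
qed

lemma hcomp_mult:
  "hcomp e (u*v) = (\<Sum>a\<in>mdeg ` keys u. \<Sum>b\<in>mdeg ` keys v.
      (if a + b = e then hcomp a u * hcomp b v else 0))"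
proof -
  have eq: "u * v = (\<Sum>a\<in>mdeg ` keys u. hcomp a u) * (\<Sum>b\<in>mdeg ` keys v. hcomp b v)"
    using hcomp_decomp[of u] hcomp_decomp[of v] by (rule arg_cong2[where f="(*)"])
  have "hcomp e (u*v) = hcomp e (\<Sum>a\<in>mdeg ` keys u. \<Sum>b\<in>mdeg ` keys v. hcomp a u * hcomp b v)"
    unfolding eq by (simp only: sum_product)
  also have "\<dots> = (\<Sum>a\<in>mdeg ` keys u. \<Sum>b\<in>mdeg ` keys v. hcomp e (hcomp a u * hcomp b v))"
    by (simp only: hcomp_sum)
  also have "\<dots> = (\<Sum>a\<in>mdeg ` keys u. \<Sum>b\<in>mdeg ` keys v.
      (if a + b = e then hcomp a u * hcomp b v else 0))"
    by (intro sum.cong refl hcomp_prod_hom)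
  finally show ?thesis .
qed



lemma Var_alt: "Var i = single (single i 1) 1"
  by (simp add: Var_def)

lemma Const_Var: "Const c * Var j = single (single j 1) c"
  by (simp add: Const_def Var_def mult_single)

lemma keys_add_nat: "keys ((a::nat\<Rightarrow>\<^sub>0nat) + b) = keys a \<union> keys b"
  by (auto simp: in_keys_iff lookup_add)

lemma PR_add: "p \<in> PolyRing n \<Longrightarrow> q \<in> PolyRing n \<Longrightarrow> p + q \<in> PolyRing n"
  unfolding PolyRing_def using keys_add[of p q] by blast

lemma PR_mult: "p \<in> PolyRing n \<Longrightarrow> q \<in> PolyRing n \<Longrightarrow> p * q \<in> PolyRing n"
  unfolding PolyRing_def using keys_mult[of p q] by (force simp: keys_add_nat)

lemma PR_zero: "0 \<in> PolyRing n"
  by (simp add: PolyRing_def)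

lemma PR_sum: "(\<And>x. x \<in> X \<Longrightarrow> g x \<in> PolyRing n) \<Longrightarrow> sum g X \<in> PolyRing n"
  by (induction X rule: infinite_finite_induct) (auto intro: PR_add PR_zero)

lemma PR_hcomp: "p \<in> PolyRing n \<Longrightarrow> hcomp d p \<in> PolyRing n"
  unfolding PolyRing_def using keys_hcomp by blast

lemma PR_single: "(\<And>i. i \<in> keys m \<Longrightarrow> i < n) \<Longrightarrow> single m c \<in> PolyRing n"
  unfolding PolyRing_def by auto

lemma PR_Var: "i < n \<Longrightarrow> Var i \<in> PolyRing n"
  unfolding Var_alt by (rule PR_single) auto

lemma homog_single: "homog (mdeg m) (single m c)"
  by (simp add: homog_def)

lemma homog_Var: "homog 1 (Var i)"
  unfolding Var_alt using homog_single[of "single i 1" 1] unfolding mdeg_single1 .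

lemma PRplus_I: "p \<in> PolyRing n \<Longrightarrow> homog e p \<Longrightarrow> e \<noteq> 0 \<Longrightarrow> p \<in> PolyRing_plus n"
  unfolding PolyRing_plus_def using hcomp_homog0[of e p 0] by auto

lemma mono_decomp: "p = (\<Sum>m\<in>keys p. single m (lookup p m))"
proof (rule poly_mapping_eqI)
  fix k
  have "(\<Sum>m\<in>keys p. lookup (single m (lookup p m)) k) = (\<Sum>m\<in>keys p. if m = k then lookup p m else 0)"
    by (rule sum.cong) (auto simp: lookup_single when_def)
  also have "\<dots> = lookup p k" by (auto simp: in_keys_iff)
  finally show "lookup p k = lookup (\<Sum>m\<in>keys p. single m (lookup p m)) k"
    by (simp add: lookup_sum)
qed

lemma homog0_Const: assumes "homog 0 f" shows "f = Const (lookup f 0)"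
proof (rule poly_mapping_eqI)
  fix k
  show "lookup f k = lookup (Const (lookup f 0)) k"
  proof (cases "k = 0")
    case False
    then have "k \<notin> keys f" using assms mdeg_eq0 unfolding homog_def by blast
    then show ?thesis using False by (simp add: Const_def lookup_single when_def in_keys_iff)
  qed (simp add: Const_def)
qed

lemma sub_zero: "k_subalgebra n C \<Longrightarrow> 0 \<in> C"
  unfolding k_subalgebra_def by (metis Const_zero)

lemma sub_sum: "k_subalgebra n C \<Longrightarrow> (\<And>x. x \<in> X \<Longrightarrow> g x \<in> C) \<Longrightarrow> sum g X \<in> C"
  by (induction X rule: infinite_finite_induct) (auto intro: sub_zero simp: k_subalgebra_def)

lemma ret_zero: "retraction n A \<pi> \<Longrightarrow> \<pi> 0 = 0"
  unfolding retraction_def using PR_zero by (metis add_0 add_left_imp_eq add.right_neutral)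

lemma ret_sum: "retraction n A \<pi> \<Longrightarrow> (\<And>x. x \<in> X \<Longrightarrow> g x \<in> PolyRing n) \<Longrightarrow> \<pi> (sum g X) = (\<Sum>x\<in>X. \<pi> (g x))"
proof (induction X rule: infinite_finite_induct)
  case (insert x F)
  have "\<pi> (g x + sum g F) = \<pi> (g x) + \<pi> (sum g F)"
    using insert.prems PR_sum[of F g n] unfolding retraction_def by auto
  then show ?case using insert by simp
qed (auto simp: ret_zero)

lemma homog_in_C:
  assumes kA: "k_subalgebra n A" and gA: "graded A" and rA: "retraction n A \<pi>"
    and pp: "\<pi> ` PolyRing_plus n \<subseteq> PolyRing_plus n"
    and kC: "k_subalgebra n C" and A1: "\<And>p. p \<in> A \<Longrightarrow> homog 1 p \<Longrightarrow> p \<in> C"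
  shows "f \<in> A \<Longrightarrow> homog e f \<Longrightarrow> f \<in> C"
proof (induction e arbitrary: f rule: less_induct)
  case (less e f)
  have AP: "A \<subseteq> PolyRing n" using kA by (simp add: k_subalgebra_def)
  have Cmul: "p \<in> C \<Longrightarrow> q \<in> C \<Longrightarrow> p * q \<in> C" for p q using kC by (simp add: k_subalgebra_def)
  consider "e = 0" | "e = 1" | "e \<ge> 2" by linarith
  then show ?case
  proof cases
    case 1
    have "Const (lookup f 0) \<in> C" using kC by (simp add: k_subalgebra_def)
    then show ?thesis using homog0_Const[of f] less.prems 1 by simp
  next
    case 2
    then show ?thesis using A1 less.prems by simp
  next
    case 3
    have fPR: "f \<in> PolyRing n" using less.prems AP by auto
    have prod_term: "hcomp e (u*v) \<in> C" if u: "u \<in> A" "hcomp 0 u = 0" and v: "v \<in> A" "hcomp 0 v = 0" for u v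
    proof -
      have "(if a + b = e then hcomp a u * hcomp b v else 0) \<in> C" for a b
      proof (cases "a + b = e")
        case True
        show ?thesis
        proof (cases "a = 0 \<or> b = 0")
          case True
          then show ?thesis using u v sub_zero[OF kC] by auto
        next
          case False
          then have "a < e" "b < e" using \<open>a + b = e\<close> by auto
          moreover have "hcomp a u \<in> A" "hcomp b v \<in> A" using gA u v by (auto simp: graded_def)
          ultimately have "hcomp a u \<in> C" "hcomp b v \<in> C" using less.IH homog_hcomp by blast+
          then show ?thesis using True Cmul by simp
        qed
      qed (simp add: sub_zero[OF kC])
      then show ?thesis unfolding hcomp_mult by (intro sub_sum[OF kC]) 
    qed
    define im where "im m = (SOME i. i \<in> keys m)" for m :: "nat \<Rightarrow>\<^sub>0 nat"
    define h where "h m = single (m - single (im m) 1) (lookup f m)" for m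
    have mdm: "m \<in> keys f \<Longrightarrow> mdeg m = e" for m using less.prems by (simp add: homog_def)
    have key: "m \<in> keys f \<Longrightarrow> im m \<in> keys m" for m
    proof -
      assume m: "m \<in> keys f"
      then have "keys m \<noteq> {}" using mdeg_pos_key[of m] mdm[of m] 3 by auto
      then obtain i where "i \<in> keys m" by blast
      then show ?thesis unfolding im_def by (rule someI)
    qed
    have mon: "single m (lookup f m) = Var (im m) * h m" if "m \<in> keys f" for m
    proof -
      have "m = single (im m) 1 + (m - single (im m) 1)" using split_mon(1)[OF key[OF that]] .
      then show ?thesis unfolding h_def Var_alt mult_single by simp
    qed
    have fdec: "f = (\<Sum>m\<in>keys f. Var (im m) * h m)"
      using mono_decomp[of f] mon by (metis (no_types, lifting) sum.cong)
    have hPR: "h m \<in> PolyRing_plus n" if "m \<in> keys f" for m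
    proof -
      have sm: "m = single (im m) 1 + (m - single (im m) 1)" using split_mon(1)[OF key[OF that]] .
      have "mdeg m = 1 + mdeg (m - single (im m) 1)" by (subst sm) (simp add: mdeg_add)
      then have "homog (e - 1) (h m)" unfolding h_def using homog_single mdm[OF that] by simp
      moreover have "h m \<in> PolyRing n" unfolding h_def
        by (intro PR_single) (use split_mon(2)[OF key[OF that]] fPR that in \<open>auto simp: PolyRing_def\<close>)
      ultimately show ?thesis using PRplus_I 3 by force
    qed
    have VPR: "Var (im m) \<in> PolyRing_plus n" if "m \<in> keys f" for m
    proof -
      have "im m < n" using key[OF that] fPR that unfolding PolyRing_def by auto
      then show ?thesis using PRplus_I[OF PR_Var homog_Var] by simp
    qed
    have PRp: "PolyRing_plus n \<subseteq> PolyRing n" by (auto simp: PolyRing_plus_def)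
    have piA: "p \<in> PolyRing n \<Longrightarrow> \<pi> p \<in> A" for p using rA by (auto simp: retraction_def)
    have pi0: "p \<in> PolyRing_plus n \<Longrightarrow> hcomp 0 (\<pi> p) = 0" for p using pp by (auto simp: PolyRing_plus_def)
    have VP: "Var (im m) \<in> PolyRing n" "h m \<in> PolyRing n" if "m \<in> keys f" for m
      using VPR[OF that] hPR[OF that] PRp by auto
    have "\<pi> f = \<pi> (\<Sum>m\<in>keys f. Var (im m) * h m)"
      by (rule arg_cong[where f=\<pi>, OF fdec])
    also have "\<dots> = (\<Sum>m\<in>keys f. \<pi> (Var (im m) * h m))"
      by (rule ret_sum[OF rA]) (intro PR_mult VP)
    also have "\<dots> = (\<Sum>m\<in>keys f. \<pi> (Var (im m)) * \<pi> (h m))"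
    proof (rule sum.cong[OF refl])
      fix m assume "m \<in> keys f"
      then show "\<pi> (Var (im m) * h m) = \<pi> (Var (im m)) * \<pi> (h m)"
        using VP[of m] rA unfolding retraction_def by blast
    qed
    finally have pf: "\<pi> f = (\<Sum>m\<in>keys f. \<pi> (Var (im m)) * \<pi> (h m))" .
    have "\<pi> f = f" using less.prems rA by (auto simp: retraction_def)
    then have "f = hcomp e (\<pi> f)" using hcomp_homog[OF less.prems(2)] by simp
    also have "\<dots> = (\<Sum>m\<in>keys f. hcomp e (\<pi> (Var (im m)) * \<pi> (h m)))"
      unfolding pf hcomp_sum ..
    also have "\<dots> \<in> C"
    proof (rule sub_sum[OF kC])
      fix m assume m: "m \<in> keys f"
      show "hcomp e (\<pi> (Var (im m)) * \<pi> (h m)) \<in> C"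
        by (rule prod_term[OF piA[OF VP(1)[OF m]] pi0[OF VPR[OF m]] piA[OF VP(2)[OF m]] pi0[OF hPR[OF m]]])
    qed
    finally show ?thesis .
  qed
qed



definition LF :: "nat \<Rightarrow> (nat \<Rightarrow> 'a::field) \<Rightarrow> 'a mpol" where
  "LF n c = (\<Sum>j<n. sc (c j) (Var j))"

lemma lin_var_LF: "lin_var n \<sigma> i = LF n (\<sigma> i)"
  by (simp add: lin_var_def LF_def sc_def)

lemma single1_inj: "single j (Suc 0) = single k (Suc 0) \<longleftrightarrow> j = k"
proof
  assume eq: "single j (Suc 0) = single k (Suc 0)"
  have "lookup (single j (Suc 0)) j = lookup (single k (Suc 0)) j" using eq by simp
  then show "j = k" by (simp add: lookup_single when_def split: if_splits)
qed simp

lemma sc_Var: "sc a (Var j) = single (single j (Suc 0)) a"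
  by (simp add: sc_def Const_Var)

lemma lookup_sc_Var: "lookup (sc a (Var j)) (single k (Suc 0)) = (if j = k then a else 0)"
  by (simp add: sc_Var lookup_single when_def single1_inj)

lemma Var_inj: "Var i = (Var j :: 'a::field mpol) \<longleftrightarrow> i = j"
  by (metis Var_alt lookup_single_eq lookup_single_not_eq single1_inj zero_neq_one)

lemma lookup_LF: "lookup (LF n c) (single k (Suc 0)) = (if k < n then c k else 0)"
proof -
  have "lookup (LF n c) (single k (Suc 0)) = (\<Sum>j<n. if j = k then c j else 0)"
    by (simp add: LF_def lookup_sum lookup_sc_Var)
  also have "\<dots> = (if k < n then c k else 0)" by simp
  finally show ?thesis .
qed

lemma LF_cong: "(\<And>j. j < n \<Longrightarrow> a j = b j) \<Longrightarrow> LF n a = LF n b"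
  unfolding LF_def by (rule sum.cong) auto

lemma LF_coef: "LF n a = LF n (\<lambda>j. lookup (LF n a) (single j (Suc 0)))"
  by (rule LF_cong) (simp add: lookup_LF)

lemma homog_add: "homog e p \<Longrightarrow> homog e q \<Longrightarrow> homog e (p + q)"
  unfolding homog_def using keys_add[of p q] by blast

lemma homog_sum: "(\<And>x. x \<in> X \<Longrightarrow> homog e (g x)) \<Longrightarrow> homog e (sum g X)"
proof (induction X rule: infinite_finite_induct)
  case (insert x F)
  then show ?case by (simp add: homog_add)
qed (simp_all add: homog_def)

lemma LF_homog: "homog 1 (LF n a)"
  unfolding LF_def sc_Var
proof (intro homog_sum)
  fix x
  have "homog (mdeg (single x (Suc 0))) (single (single x (Suc 0)) (a x))" by (rule homog_single)
  then show "homog 1 (single (single x (Suc 0)) (a x))" by simp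
qed

lemma LF_PR: "LF n a \<in> PolyRing n"
  unfolding LF_def sc_Var by (intro PR_sum PR_single) auto

lemma LF_rep:
  assumes "p \<in> PolyRing n" "homog 1 p"
  shows "p = LF n (\<lambda>j. lookup p (single j (Suc 0)))"
proof (rule poly_mapping_eqI)
  fix m
  show "lookup p m = lookup (LF n (\<lambda>j. lookup p (single j (Suc 0)))) m"
  proof (cases "m \<in> keys p")
    case True
    then have "mdeg m = 1" using assms(2) by (simp add: homog_def)
    then obtain j where j: "m = single j 1" "j \<in> keys m" by (rule mdeg_eq1)
    then have "j < n" using assms(1) True by (auto simp: PolyRing_def)
    then show ?thesis using j by (simp add: lookup_LF)
  next
    case False
    then have "lookup p m = 0" by (simp add: in_keys_iff)
    moreover have "lookup (LF n (\<lambda>j. lookup p (single j (Suc 0)))) m = 0"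
    proof (cases "\<exists>j. m = single j 1")
      case True
      then obtain j where "m = single j 1" by blast
      then show ?thesis using False by (simp add: lookup_LF in_keys_iff)
    next
      case F: False
      have "m \<notin> keys (LF n (\<lambda>j. lookup p (single j (Suc 0))))"
      proof
        assume "m \<in> keys (LF n (\<lambda>j. lookup p (single j (Suc 0))))"
        then have "mdeg m = 1" using LF_homog by (auto simp: homog_def)
        then obtain j where "m = single j 1" by (rule mdeg_eq1)
        then show False using F by blast
      qed
      then show ?thesis by (simp add: in_keys_iff)
    qed
    ultimately show ?thesis by simp
  qed
qed

lemma LF_add: "LF n a + LF n b = LF n (\<lambda>j. a j + b j)"
  by (simp add: LF_def sum.distrib vs.scale_left_distrib)

lemma LF_scale: "sc c (LF n a) = LF n (\<lambda>j. c * a j)"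
  by (simp add: LF_def vs.scale_sum_right)

lemma LF_zero: "LF n (\<lambda>j. 0) = 0"
  by (simp add: LF_def)

lemma LF_Var: "j < n \<Longrightarrow> LF n (\<lambda>l. if l = j then 1 else 0) = Var j"
  by (simp add: LF_def if_distrib[of "\<lambda>c. sc c _"] sum.delta' cong: if_cong)

lemma subspace_LF: "vs.subspace (range (LF n))"
  unfolding vs.subspace_def
  by (auto simp: LF_add LF_scale intro: range_eqI[where x="\<lambda>j. 0"] LF_zero[symmetric]) 

lemma LF_span: "LF n a \<in> vs.span (Var ` {..<n})"
  unfolding LF_def by (intro vs.span_sum vs.span_scale vs.span_base) auto

lemma span_Var: "vs.span (Var ` {..<n}) = range (LF n)"
proof
  show "vs.span (Var ` {..<n}) \<subseteq> range (LF n)"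
  proof (rule vs.span_minimal[OF _ subspace_LF])
    show "Var ` {..<n} \<subseteq> range (LF n)"
    proof
      fix x assume "x \<in> Var ` {..<n}"
      then obtain j where "j < n" "x = Var j" by auto
      then show "x \<in> range (LF n)" using LF_Var[of j n] by (metis rangeI)
    qed
  qed
  show "range (LF n) \<subseteq> vs.span (Var ` {..<n})" using LF_span by blast
qed

lemma indep_Var: "vs.independent (Var ` {..<n} :: 'a::field mpol set)"
  unfolding vs.independent_explicit_module
proof (intro allI impI)
  fix t u v assume t: "finite t" "t \<subseteq> Var ` {..<n}" and s: "(\<Sum>v\<in>t. sc (u v) v) = (0::'a mpol)" and v: "v \<in> t"
  obtain k where k: "v = Var k" using v t by auto
  have "0 = lookup (\<Sum>w\<in>t. sc (u w) w) (single k (Suc 0))" using s by simp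
  also have "\<dots> = (\<Sum>w\<in>t. if w = v then u w else 0)"
    unfolding lookup_sum
  proof (rule sum.cong[OF refl])
    fix w assume "w \<in> t"
    then obtain j where "w = Var j" using t by auto
    then show "lookup (sc (u w) w) (single k (Suc 0)) = (if w = v then u w else 0)"
      using k by (simp add: lookup_sc_Var Var_inj)
  qed
  also have "\<dots> = u v" using v t by simp
  finally show "u v = 0" by simp
qed

lemma card_Var: "card (Var ` {..<n} :: 'a::field mpol set) = n"
  by (subst card_image) (auto simp: inj_on_def Var_inj)



lemma LF_sum: "(\<Sum>j\<in>X. LF n (a j)) = LF n (\<lambda>l. \<Sum>j\<in>X. a j l)"
proof (induction X rule: infinite_finite_induct)
  case (insert x F)
  then show ?case by (simp add: LF_add)
qed (simp_all add: LF_zero)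

lemma gen_sub: "k_subalgebra n C \<Longrightarrow> vs.subspace C"
  unfolding vs.subspace_def k_subalgebra_def sc_def by (metis Const_zero)

theorem corollary5p15:
  fixes n :: nat and A :: "'a::field mpol set" and \<pi> :: "'a mpol \<Rightarrow> 'a mpol"
  assumes "k_subalgebra n A" and "graded A"
    and "retraction n A \<pi>"
    and "\<pi> ` PolyRing_plus n \<subseteq> PolyRing_plus n"
  shows "\<exists>\<sigma> d. invertible_matrix n \<sigma> \<and> d \<le> n \<and>
           A = gen_algebra n (lin_var n \<sigma> ` {..<d})"
proof -
  note kA = assms(1) and gA = assms(2) and rA = assms(3) and pp = assms(4)
  have AP: "A \<subseteq> PolyRing n" using kA by (simp add: k_subalgebra_def)
  define A1 where "A1 = {p \<in> A. homog 1 p}"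
  define V :: "'a mpol set" where "V = range (LF n)"
  define T :: "'a mpol set" where "T = Var ` {..<n}"
  have A1V: "A1 \<subseteq> V" unfolding A1_def V_def using AP LF_rep by blast
  obtain S where S: "S \<subseteq> A1" "vs.independent S" "A1 \<subseteq> vs.span S"
    by (rule vs.maximal_independent_subset)
  obtain B where B: "S \<subseteq> B" "B \<subseteq> V" "vs.independent B" "V \<subseteq> vs.span B"
    using vs.maximal_independent_subset_extend[of S V] S A1V by blast
  have spanT: "vs.span T = V" unfolding T_def V_def by (rule span_Var)
  have finT: "finite T" "card T = n" unfolding T_def by (auto simp: card_Var)
  have "finite B \<and> card B \<le> card T"
    by (rule vs.independent_span_bound[OF finT(1) B(3)]) (use B(2) spanT in auto)
  then have finB: "finite B" and cB1: "card B \<le> n" using finT by auto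
  have TV: "T \<subseteq> V" using spanT vs.span_superset by blast
  have "finite T \<and> card T \<le> card B"
    by (rule vs.independent_span_bound[OF finB]) (use indep_Var TV B(4) T_def in auto)
  then have cB: "card B = n" using finT cB1 by auto
  have finS: "finite S" using finB B(1) finite_subset by blast
  define d where "d = card S"
  have dn: "d \<le> n" unfolding d_def using card_mono[OF finB B(1)] cB by simp
  obtain f1 where f1: "bij_betw f1 {0..<d} S" using ex_bij_betw_nat_finite[OF finS] d_def by blast
  have cBS: "card (B - S) = n - d" using card_Diff_subset[OF finS B(1)] cB d_def by simp
  obtain f2 where f2: "bij_betw f2 {0..<n-d} (B - S)"
    using ex_bij_betw_nat_finite[of "B - S"] finB cBS by auto
  define b where "b i = (if i < d then f1 i else f2 (i - d))" for i
  have bS: "b ` {..<d} = S"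
  proof -
    have "b ` {..<d} = f1 ` {0..<d}" unfolding b_def by (auto simp: image_def)
    then show ?thesis using f1 by (simp add: bij_betw_def)
  qed
  have bimg: "b ` {..<n} = B"
  proof
    show "b ` {..<n} \<subseteq> B"
    proof
      fix x assume "x \<in> b ` {..<n}"
      then obtain i where i: "i < n" "x = b i" by auto
      show "x \<in> B"
      proof (cases "i < d")
        case True
        then show ?thesis using i f1 B(1) unfolding b_def bij_betw_def by auto
      next
        case False
        then have "i - d \<in> {0..<n-d}" using i by auto
        then show ?thesis using i f2 False unfolding b_def bij_betw_def by auto
      qed
    qed
    show "B \<subseteq> b ` {..<n}"
    proof
      fix x assume x: "x \<in> B"
      show "x \<in> b ` {..<n}"
      proof (cases "x \<in> S")
        case True
        then show ?thesis using bS dn by auto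
      next
        case False
        then have "x \<in> f2 ` {0..<n-d}" using x f2 by (auto simp: bij_betw_def)
        then obtain k where k: "k < n - d" "x = f2 k" by auto
        then have "b (k + d) = x" "k + d < n" unfolding b_def by auto
        then show ?thesis by (metis imageI lessThan_iff)
      qed
    qed
  qed
  have binj: "inj_on b {..<n}"
    by (rule eq_card_imp_inj_on) (auto simp: bimg cB)
  define \<sigma> where "\<sigma> i j = lookup (b i) (single j (Suc 0))" for i j
  have bLF: "b i = LF n (\<sigma> i)" if "i < n" for i
  proof -
    have "b i \<in> V" using bimg that B(2) by auto
    then obtain a where "b i = LF n a" unfolding V_def by auto
    then show ?thesis unfolding \<sigma>_def using LF_coef by metis
  qed
  have linS: "lin_var n \<sigma> ` {..<d} = S"
  proof -
    have "lin_var n \<sigma> ` {..<d} = b ` {..<d}"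
      using dn by (intro image_cong refl) (simp add: lin_var_LF bLF)
    then show ?thesis using bS by simp
  qed
  have S_A: "S \<subseteq> A" using S(1) A1_def by auto
  have "A = gen_algebra n S"
  proof
    show "gen_algebra n S \<subseteq> A" unfolding gen_algebra_def using kA S_A by blast
    show "A \<subseteq> gen_algebra n S"
    proof
      fix f assume f: "f \<in> A"
      show "f \<in> gen_algebra n S" unfolding gen_algebra_def
      proof
        fix C assume "C \<in> {C. k_subalgebra n C \<and> S \<subseteq> C}"
        then have kC: "k_subalgebra n C" and SC: "S \<subseteq> C" by auto
        have spC: "vs.span S \<subseteq> C" by (rule vs.span_minimal[OF SC gen_sub[OF kC]])
        have A1C: "p \<in> C" if "p \<in> A" "homog 1 p" for p
          using that S(3) spC A1_def by auto
        have "f = (\<Sum>a\<in>mdeg ` keys f. hcomp a f)" by (rule hcomp_decomp)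
        also have "\<dots> \<in> C"
        proof (rule sub_sum[OF kC])
          fix a
          have "hcomp a f \<in> A" using gA f by (simp add: graded_def)
          then show "hcomp a f \<in> C"
            using homog_in_C[OF kA gA rA pp kC A1C] homog_hcomp by blast
        qed
        finally show "f \<in> C" .
      qed
    qed
  qed
  then have Aeq: "A = gen_algebra n (lin_var n \<sigma> ` {..<d})" using linS by simp
  have "\<forall>k. \<exists>u. k < n \<longrightarrow> Var k = (\<Sum>j<n. sc (u j) (b j))"
  proof (intro allI)
    fix k
    show "\<exists>u. k < n \<longrightarrow> Var k = (\<Sum>j<n. sc (u j) (b j))"
    proof (cases "k < n")
      case True
      then have "Var k \<in> vs.span B" using TV B(4) T_def by auto
      then obtain w where w: "Var k = (\<Sum>v\<in>B. sc (w v) v)"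
        unfolding vs.span_finite[OF finB] by auto
      also have "\<dots> = (\<Sum>j<n. sc (w (b j)) (b j))"
        by (subst bimg[symmetric], subst sum.reindex[OF binj]) simp
      finally have "Var k = (\<Sum>j<n. sc ((\<lambda>j. w (b j)) j) (b j))" .
      then show ?thesis by (rule exI[where x="\<lambda>j. w (b j)", OF impI])
    qed simp
  qed
  then obtain \<tau> where tau0: "\<forall>k. k < n \<longrightarrow> Var k = (\<Sum>j<n. sc (\<tau> k j) (b j))"
    using choice[of "\<lambda>k u. k < n \<longrightarrow> Var k = (\<Sum>j<n. sc (u j) (b j))"] by blast
  have tau: "\<And>k. k < n \<Longrightarrow> Var k = (\<Sum>j<n. sc (\<tau> k j) (b j))" using tau0 by blast
  have inv1: "(\<Sum>j<n. \<tau> k j * \<sigma> j l) = (if k = l then 1 else 0)" if "k < n" "l < n" for k l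
  proof -
    have "Var k = (\<Sum>j<n. sc (\<tau> k j) (LF n (\<sigma> j)))"
      using tau[OF that(1)] bLF by simp
    also have "\<dots> = LF n (\<lambda>l. \<Sum>j<n. \<tau> k j * \<sigma> j l)"
      by (simp add: LF_scale LF_sum)
    finally have "lookup (Var k) (single l (Suc 0)) = (\<Sum>j<n. \<tau> k j * \<sigma> j l)"
      using that by (simp add: lookup_LF)
    moreover have "lookup (Var k :: 'a mpol) (single l (Suc 0)) = (if k = l then 1 else 0)"
      using lookup_sc_Var[of 1 k l] vs.scale_one by simp
    ultimately show ?thesis by simp
  qed
  have inv2: "(\<Sum>k<n. \<sigma> i k * \<tau> k j) = (if i = j then 1 else 0)" if "i < n" "j < n" for i j
  proof -
    define c where "c j = (\<Sum>k<n. \<sigma> i k * \<tau> k j) - (if i = j then 1 else 0)" for j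
    have "b i = (\<Sum>k<n. sc (\<sigma> i k) (Var k))" using bLF[OF that(1)] by (simp add: LF_def)
    also have "\<dots> = (\<Sum>k<n. sc (\<sigma> i k) (\<Sum>j<n. sc (\<tau> k j) (b j)))"
      by (intro sum.cong refl) (simp add: tau)
    also have "\<dots> = (\<Sum>k<n. \<Sum>j<n. sc (\<sigma> i k * \<tau> k j) (b j))"
      by (simp add: vs.scale_sum_right)
    also have "\<dots> = (\<Sum>j<n. \<Sum>k<n. sc (\<sigma> i k * \<tau> k j) (b j))"
      by (rule sum.swap)
    also have "\<dots> = (\<Sum>j<n. sc (\<Sum>k<n. \<sigma> i k * \<tau> k j) (b j))"
      by (simp add: vs.scale_sum_left)
    finally have e1: "b i = (\<Sum>j<n. sc (\<Sum>k<n. \<sigma> i k * \<tau> k j) (b j))" .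
    have e2: "b i = (\<Sum>j<n. sc (if i = j then 1 else 0) (b j))"
      using that(1) by (simp add: if_distrib[of "\<lambda>c. sc c _"] cong: if_cong)
    have "(\<Sum>j<n. sc (c j) (b j)) = 0"
      unfolding c_def vs.scale_left_diff_distrib sum_subtractf using e1 e2 by simp
    then have z: "(\<Sum>v\<in>B. sc (c (the_inv_into {..<n} b v)) v) = 0"
      by (subst bimg[symmetric], subst sum.reindex[OF binj]) (simp add: the_inv_into_f_f[OF binj])
    have "c (the_inv_into {..<n} b (b j)) = 0"
      by (rule vs.independentD[OF B(3) finB order.refl z]) (use bimg that in auto)
    then have "c j = 0" using the_inv_into_f_f[OF binj] that by simp
    then show ?thesis unfolding c_def by simp
  qed
  have "invertible_matrix n \<sigma>"
    unfolding invertible_matrix_def using inv1 inv2 by blast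
  then show ?thesis using dn Aeq by blast
qed

end
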